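(* Let $\Lambda=(\alpha,\lambda,f)$ be a Sieben twisted $S$-module structure on a semilattice of groups $A$ over an inverse semigroup $S$. Then the twisted $S$-module structure induced by the transversal $\rho(s)=\alpha(ss^{-1})\delta_s$ of the extension $A\overset{i}{\to}A*_\Lambda S\overset{j}{\to}S$ is $\Lambda$ itself.
   Context: A semilattice of groups is an inverse semigroup $A$ whose idempotents are central; $A_e=\{a: aa^{-1}=a^{-1}a=e\}$. An endomorphism $\varphi$ of $A$ is relatively invertible if there are $\bar\varphi\in\mathrm{End}\,A$, $e_\varphi\in E(A)$ with $\bar\varphi\varphi(a)=e_\varphi a$, $\varphi\bar\varphi(a)=\varphi(e_\varphi)a$, $e_\varphi$ the identity of $\bar\varphi(A)$, $\varphi(e_\varphi)$ the identity of $\varphi(A)$. A twisted $S$-module structure on $A$ is $(\alpha,\lambda,f)$ with $\alpha:E(S)\to E(A)$ an isomorphism, $s\mapsto\lambda_s$ relatively invertible endomorphisms, $f:S\times S\to A$ with $f(s,t)\in A_{\alpha(stt^{-1}s^{-1})}$, satisfying (i) $\lambda_e(a)=\alpha(e)a$ ($e\in E(S)$); (ii) $\lambda_s(\alpha(e))=\alpha(ses^{-1})$; (iii) $\lambda_s\lambda_t(a)=f(s,t)\lambda_{st}(a)f(s,t)^{-1}$; (iv) $f(se,e)=\alpha(ses^{-1})$, $f(e,es)=\alpha(ess^{-1})$; (v) $\lambda_s(f(t,u))f(s,tu)=f(s,t)f(st,u)$; Sieben means also $f(s,e)=\alpha(ses^{-1})$, $f(e,s)=\alpha(ess^{-1})$.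 The crossed product $A*_\Lambda S=\{a\delta_s: aa^{-1}=\alpha(ss^{-1})\}$ with $a\delta_s\cdot b\delta_t=a\lambda_s(b)f(s,t)\delta_{st}$ is an inverse semigroup, an extension of $A$ by $S$ via $i(a)=a\delta_{\alpha^{-1}(aa^{-1})}$ and $j(a\delta_s)=s$. For a transversal $\rho$ of $j$ ($j\circ\rho=\mathrm{id}$, $\rho(E(S))\subseteq E(A*_\Lambda S)$), the induced structure is $(\alpha_\rho,\lambda_\rho,f_\rho)$: $\alpha_\rho=i^{-1}\circ\rho|_{E(S)}$, $(\lambda_\rho)_s(a)=i^{-1}(\rho(s)i(a)\rho(s)^{-1})$, $f_\rho(s,t)$ the unique element of $A_{\alpha_\rho(stt^{-1}s^{-1})}$ with $\rho(s)\rho(t)=i(f_\rho(s,t))\rho(st)$. *)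

theory Defs
  imports Main
begin

definition inv_sg :: "'a set \<Rightarrow> ('a \<Rightarrow> 'a \<Rightarrow> 'a) \<Rightarrow> bool" where
  "inv_sg C m \<longleftrightarrow>
     (\<forall>x\<in>C. \<forall>y\<in>C. m x y \<in> C) \<and>
     (\<forall>x\<in>C. \<forall>y\<in>C. \<forall>z\<in>C. m (m x y) z = m x (m y z)) \<and>
     (\<forall>x\<in>C. \<exists>!y. y \<in> C \<and> m (m x y) x = x \<and> m (m y x) y = y)"

definition sinv :: "'a set \<Rightarrow> ('a \<Rightarrow> 'a \<Rightarrow> 'a) \<Rightarrow> 'a \<Rightarrow> 'a" where
  "sinv C m x = (THE y. y \<in> C \<and> m (m x y) x = x \<and> m (m y x) y = y)"

definition idem :: "'a set \<Rightarrow> ('a \<Rightarrow> 'a \<Rightarrow> 'a) \<Rightarrow> 'a set" where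
  "idem C m = {e \<in> C. m e e = e}"

definition semilattice_of_groups :: "('a \<Rightarrow> 'a \<Rightarrow> 'a) \<Rightarrow> bool" where
  "semilattice_of_groups m \<longleftrightarrow> inv_sg UNIV m \<and>
     (\<forall>e \<in> idem UNIV m. \<forall>a. m e a = m a e)"

definition grp_comp :: "('a \<Rightarrow> 'a \<Rightarrow> 'a) \<Rightarrow> 'a \<Rightarrow> 'a set" where
  "grp_comp m e = {a. m a (sinv UNIV m a) = e \<and> m (sinv UNIV m a) a = e}"

definition endo :: "('a \<Rightarrow> 'a \<Rightarrow> 'a) \<Rightarrow> ('a \<Rightarrow> 'a) \<Rightarrow> bool" where
  "endo m \<phi> \<longleftrightarrow> (\<forall>a b. \<phi> (m a b) = m (\<phi> a) (\<phi> b))"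

definition is_identity_of :: "('a \<Rightarrow> 'a \<Rightarrow> 'a) \<Rightarrow> 'a \<Rightarrow> 'a set \<Rightarrow> bool" where
  "is_identity_of m e X \<longleftrightarrow> e \<in> X \<and> (\<forall>x\<in>X. m e x = x \<and> m x e = x)"

definition rel_invertible :: "('a \<Rightarrow> 'a \<Rightarrow> 'a) \<Rightarrow> ('a \<Rightarrow> 'a) \<Rightarrow> bool" where
  "rel_invertible m \<phi> \<longleftrightarrow> endo m \<phi> \<and>
     (\<exists>\<psi> e. endo m \<psi> \<and> e \<in> idem UNIV m \<and>
        (\<forall>a. \<psi> (\<phi> a) = m e a) \<and>
        (\<forall>a. \<phi> (\<psi> a) = m (\<phi> e) a) \<and>
        is_identity_of m e (range \<psi>) \<and>
        is_identity_of m (\<phi> e) (range \<phi>))"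

definition twisted_module ::
  "('s \<Rightarrow> 's \<Rightarrow> 's) \<Rightarrow> ('a \<Rightarrow> 'a \<Rightarrow> 'a) \<Rightarrow> ('s \<Rightarrow> 'a) \<Rightarrow> ('s \<Rightarrow> 'a \<Rightarrow> 'a)
   \<Rightarrow> ('s \<Rightarrow> 's \<Rightarrow> 'a) \<Rightarrow> bool" where
  "twisted_module mS mA \<alpha> lam f \<longleftrightarrow>
     bij_betw \<alpha> (idem UNIV mS) (idem UNIV mA) \<and>
     (\<forall>e\<in>idem UNIV mS. \<forall>e'\<in>idem UNIV mS. \<alpha> (mS e e') = mA (\<alpha> e) (\<alpha> e')) \<and>
     (\<forall>s. rel_invertible mA (lam s)) \<and>
     (\<forall>s t. f s t \<in> grp_comp mA
        (\<alpha> (mS (mS (mS s t) (sinv UNIV mS t)) (sinv UNIV mS s)))) \<and>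
     (\<forall>e\<in>idem UNIV mS. \<forall>a. lam e a = mA (\<alpha> e) a) \<and>
     (\<forall>s. \<forall>e\<in>idem UNIV mS. lam s (\<alpha> e) = \<alpha> (mS (mS s e) (sinv UNIV mS s))) \<and>
     (\<forall>s t a. lam s (lam t a) = mA (mA (f s t) (lam (mS s t) a)) (sinv UNIV mA (f s t))) \<and>
     (\<forall>s. \<forall>e\<in>idem UNIV mS.
        f (mS s e) e = \<alpha> (mS (mS s e) (sinv UNIV mS s)) \<and>
        f e (mS e s) = \<alpha> (mS (mS e s) (sinv UNIV mS s))) \<and>
     (\<forall>s t u. mA (lam s (f t u)) (f s (mS t u)) = mA (f s t) (f (mS s t) u))"

definition sieben :: "('s \<Rightarrow> 's \<Rightarrow> 's) \<Rightarrow> ('a \<Rightarrow> 'a \<Rightarrow> 'a) \<Rightarrow> ('s \<Rightarrow> 'a) \<Rightarrow> ('s \<Rightarrow> 'a \<Rightarrow> 'a)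
   \<Rightarrow> ('s \<Rightarrow> 's \<Rightarrow> 'a) \<Rightarrow> bool" where
  "sieben mS mA \<alpha> lam f \<longleftrightarrow> twisted_module mS mA \<alpha> lam f \<and>
     (\<forall>s. \<forall>e\<in>idem UNIV mS.
        f s e = \<alpha> (mS (mS s e) (sinv UNIV mS s)) \<and>
        f e s = \<alpha> (mS (mS e s) (sinv UNIV mS s)))"

section \<open>Crossed product A *_Lambda S; the element a delta_s is the pair (a, s)\<close>

definition cp_carrier :: "('s \<Rightarrow> 's \<Rightarrow> 's) \<Rightarrow> ('a \<Rightarrow> 'a \<Rightarrow> 'a) \<Rightarrow> ('s \<Rightarrow> 'a) \<Rightarrow> ('a \<times> 's) set" where
  "cp_carrier mS mA \<alpha> = {(a, s). mA a (sinv UNIV mA a) = \<alpha> (mS s (sinv UNIV mS s))}"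

definition cp_mult :: "('s \<Rightarrow> 's \<Rightarrow> 's) \<Rightarrow> ('a \<Rightarrow> 'a \<Rightarrow> 'a) \<Rightarrow> ('s \<Rightarrow> 'a \<Rightarrow> 'a)
   \<Rightarrow> ('s \<Rightarrow> 's \<Rightarrow> 'a) \<Rightarrow> 'a \<times> 's \<Rightarrow> 'a \<times> 's \<Rightarrow> 'a \<times> 's" where
  "cp_mult mS mA lam f x y =
     (mA (mA (fst x) (lam (snd x) (fst y))) (f (snd x) (snd y)), mS (snd x) (snd y))"

definition cp_i :: "('s \<Rightarrow> 's \<Rightarrow> 's) \<Rightarrow> ('a \<Rightarrow> 'a \<Rightarrow> 'a) \<Rightarrow> ('s \<Rightarrow> 'a) \<Rightarrow> 'a \<Rightarrow> 'a \<times> 's" where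
  "cp_i mS mA \<alpha> a = (a, inv_into (idem UNIV mS) \<alpha> (mA a (sinv UNIV mA a)))"

definition cp_j :: "'a \<times> 's \<Rightarrow> 's" where
  "cp_j x = snd x"

definition is_transversal :: "('s \<Rightarrow> 's \<Rightarrow> 's) \<Rightarrow> ('a \<Rightarrow> 'a \<Rightarrow> 'a) \<Rightarrow> ('s \<Rightarrow> 'a)
   \<Rightarrow> ('s \<Rightarrow> 'a \<Rightarrow> 'a) \<Rightarrow> ('s \<Rightarrow> 's \<Rightarrow> 'a) \<Rightarrow> ('s \<Rightarrow> 'a \<times> 's) \<Rightarrow> bool" where
  "is_transversal mS mA \<alpha> lam f \<rho> \<longleftrightarrow>
     (\<forall>s. \<rho> s \<in> cp_carrier mS mA \<alpha>) \<and>
     (\<forall>s. cp_j (\<rho> s) = s) \<and>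
     (\<forall>e\<in>idem UNIV mS. \<rho> e \<in> idem (cp_carrier mS mA \<alpha>) (cp_mult mS mA lam f))"

definition i_inv :: "('s \<Rightarrow> 's \<Rightarrow> 's) \<Rightarrow> ('a \<Rightarrow> 'a \<Rightarrow> 'a) \<Rightarrow> ('s \<Rightarrow> 'a) \<Rightarrow> 'a \<times> 's \<Rightarrow> 'a" where
  "i_inv mS mA \<alpha> x = (THE a. cp_i mS mA \<alpha> a = x)"

definition induced_alpha :: "('s \<Rightarrow> 's \<Rightarrow> 's) \<Rightarrow> ('a \<Rightarrow> 'a \<Rightarrow> 'a) \<Rightarrow> ('s \<Rightarrow> 'a)
   \<Rightarrow> ('s \<Rightarrow> 'a \<times> 's) \<Rightarrow> 's \<Rightarrow> 'a" where
  "induced_alpha mS mA \<alpha> \<rho> e = i_inv mS mA \<alpha> (\<rho> e)"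

definition induced_lambda :: "('s \<Rightarrow> 's \<Rightarrow> 's) \<Rightarrow> ('a \<Rightarrow> 'a \<Rightarrow> 'a) \<Rightarrow> ('s \<Rightarrow> 'a)
   \<Rightarrow> ('s \<Rightarrow> 'a \<Rightarrow> 'a) \<Rightarrow> ('s \<Rightarrow> 's \<Rightarrow> 'a) \<Rightarrow> ('s \<Rightarrow> 'a \<times> 's) \<Rightarrow> 's \<Rightarrow> 'a \<Rightarrow> 'a" where
  "induced_lambda mS mA \<alpha> lam f \<rho> s a =
     i_inv mS mA \<alpha>
       (cp_mult mS mA lam f (cp_mult mS mA lam f (\<rho> s) (cp_i mS mA \<alpha> a))
          (sinv (cp_carrier mS mA \<alpha>) (cp_mult mS mA lam f) (\<rho> s)))"

definition induced_f :: "('s \<Rightarrow> 's \<Rightarrow> 's) \<Rightarrow> ('a \<Rightarrow> 'a \<Rightarrow> 'a) \<Rightarrow> ('s \<Rightarrow> 'a)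
   \<Rightarrow> ('s \<Rightarrow> 'a \<Rightarrow> 'a) \<Rightarrow> ('s \<Rightarrow> 's \<Rightarrow> 'a) \<Rightarrow> ('s \<Rightarrow> 'a \<times> 's) \<Rightarrow> 's \<Rightarrow> 's \<Rightarrow> 'a" where
  "induced_f mS mA \<alpha> lam f \<rho> s t =
     (THE a. a \<in> grp_comp mA (induced_alpha mS mA \<alpha> \<rho>
                 (mS (mS (mS s t) (sinv UNIV mS t)) (sinv UNIV mS s))) \<and>
             cp_mult mS mA lam f (\<rho> s) (\<rho> t) =
               cp_mult mS mA lam f (cp_i mS mA \<alpha> a) (\<rho> (mS s t)))"

end

theory Submission
  imports Defs
begin


locale invsg =
  fixes m :: "'a \<Rightarrow> 'a \<Rightarrow> 'a" (infixl "\<cdot>" 70)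
  assumes isg: "inv_sg UNIV m"
begin

abbreviation iv where "iv x \<equiv> sinv UNIV m x"

lemma assoc: "(x \<cdot> y) \<cdot> z = x \<cdot> (y \<cdot> z)"
  using isg unfolding inv_sg_def by blast

lemma ex1: "\<exists>!y. y \<in> UNIV \<and> (x \<cdot> y) \<cdot> x = x \<and> (y \<cdot> x) \<cdot> y = y"
  using isg unfolding inv_sg_def by blast

lemma iv_props: "(x \<cdot> iv x) \<cdot> x = x \<and> (iv x \<cdot> x) \<cdot> iv x = iv x"
proof -
  from theI'[OF ex1] show ?thesis unfolding sinv_def by simp
qed

lemma inv1[simp]: "x \<cdot> (iv x \<cdot> x) = x" using iv_props assoc by metis
lemma inv2[simp]: "iv x \<cdot> (x \<cdot> iv x) = iv x" using iv_props assoc by metis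
lemma inv1'[simp]: "x \<cdot> (iv x \<cdot> (x \<cdot> z)) = x \<cdot> z" by (metis assoc inv1)
lemma inv2'[simp]: "iv x \<cdot> (x \<cdot> (iv x \<cdot> z)) = iv x \<cdot> z" by (metis assoc inv2)

lemma inv_unique: "x \<cdot> (y \<cdot> x) = x \<Longrightarrow> y \<cdot> (x \<cdot> y) = y \<Longrightarrow> y = iv x"
  using ex1[of x] iv_props[of x] by (metis assoc UNIV_I)

lemma iv_iv[simp]: "iv (iv x) = x"
  by (metis inv_unique inv1 inv2)

lemma idem_iv: "e \<cdot> e = e \<Longrightarrow> iv e = e"
  by (metis inv_unique assoc)

lemma idem_left: "e \<cdot> e = e \<Longrightarrow> e \<cdot> (e \<cdot> z) = e \<cdot> z" by (metis assoc)

lemma idem_prod: assumes e: "e \<cdot> e = e" and f: "f \<cdot> f = f" shows "(e \<cdot> f) \<cdot> (e \<cdot> f) = e \<cdot> f"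
proof -
  define x where "x = iv (e \<cdot> f)"
  have 1: "e \<cdot> (f \<cdot> (x \<cdot> (e \<cdot> f))) = e \<cdot> f" using iv_props[of "e\<cdot>f"] unfolding x_def by (simp only: assoc)
  have 2: "x \<cdot> (e \<cdot> (f \<cdot> x)) = x" using iv_props[of "e\<cdot>f"] unfolding x_def by (simp only: assoc)
  have a: "e \<cdot> (f \<cdot> ((f \<cdot> (x \<cdot> e)) \<cdot> (e \<cdot> f))) = e \<cdot> f"
    using 1 by (simp add: assoc idem_left[OF e] idem_left[OF f])
  have b: "(f \<cdot> (x \<cdot> e)) \<cdot> ((e \<cdot> f) \<cdot> (f \<cdot> (x \<cdot> e))) = f \<cdot> (x \<cdot> e)"
  proof -
    have "(f \<cdot> (x \<cdot> e)) \<cdot> ((e \<cdot> f) \<cdot> (f \<cdot> (x \<cdot> e))) = f \<cdot> ((x \<cdot> (e \<cdot> (f \<cdot> x))) \<cdot> e)"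
      by (simp add: assoc idem_left[OF e] idem_left[OF f] e f)
    also have "\<dots> = f \<cdot> (x \<cdot> e)" using 2 by simp
    finally show ?thesis .
  qed
  have fxe: "f \<cdot> (x \<cdot> e) = x" unfolding x_def
    by (rule inv_unique) (use a b in \<open>simp_all add: assoc x_def\<close>)
  have xx: "x \<cdot> x = x"
  proof -
    have "x \<cdot> x = f \<cdot> ((x \<cdot> (e \<cdot> (f \<cdot> x))) \<cdot> e)" by (subst (1 2) fxe[symmetric]) (simp add: assoc)
    also have "\<dots> = x" using 2 fxe by (simp add: assoc)
    finally show ?thesis .
  qed
  have efx: "e \<cdot> f = x"
  proof -
    have "e \<cdot> f = iv x" unfolding x_def by simp
    thus ?thesis using idem_iv[OF xx] by simp
  qed
  show ?thesis using efx xx by simp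
qed

lemma idem_comm: assumes e: "e \<cdot> e = e" and f: "f \<cdot> f = f" shows "e \<cdot> f = f \<cdot> e"
proof -
  have ef: "(e \<cdot> f) \<cdot> (e \<cdot> f) = e \<cdot> f" by (rule idem_prod[OF e f])
  have fe: "(f \<cdot> e) \<cdot> (f \<cdot> e) = f \<cdot> e" by (rule idem_prod[OF f e])
  have "f \<cdot> e = iv (e \<cdot> f)"
  proof (rule inv_unique)
    show "e \<cdot> f \<cdot> (f \<cdot> e \<cdot> (e \<cdot> f)) = e \<cdot> f"
      using ef by (simp add: assoc idem_left[OF e] idem_left[OF f])
    show "f \<cdot> e \<cdot> (e \<cdot> f \<cdot> (f \<cdot> e)) = f \<cdot> e"
      using fe by (simp add: assoc idem_left[OF e] idem_left[OF f])
  qed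
  thus ?thesis using idem_iv[OF ef] by simp
qed

lemma idem_UNIV: "idem UNIV m = {e. e \<cdot> e = e}" unfolding idem_def by auto

lemma xiv_idem: "(x \<cdot> iv x) \<cdot> (x \<cdot> iv x) = x \<cdot> iv x" by (simp add: assoc)
lemma ivx_idem: "(iv x \<cdot> x) \<cdot> (iv x \<cdot> x) = iv x \<cdot> x" by (simp add: assoc)

lemma iv_mult: "iv (x \<cdot> y) = iv y \<cdot> iv x"
proof -
  have c: "(y \<cdot> iv y) \<cdot> (iv x \<cdot> x) = (iv x \<cdot> x) \<cdot> (y \<cdot> iv y)"
    by (rule idem_comm[OF xiv_idem ivx_idem])
  show ?thesis
  proof (rule inv_unique[symmetric])
    have "x \<cdot> y \<cdot> (iv y \<cdot> iv x \<cdot> (x \<cdot> y)) = x \<cdot> ((y \<cdot> iv y) \<cdot> (iv x \<cdot> x)) \<cdot> y" by (simp add: assoc)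
    also have "\<dots> = x \<cdot> y" by (simp only: c) (simp add: assoc)
    finally show "x \<cdot> y \<cdot> (iv y \<cdot> iv x \<cdot> (x \<cdot> y)) = x \<cdot> y" .
    have "iv y \<cdot> iv x \<cdot> (x \<cdot> y \<cdot> (iv y \<cdot> iv x)) = iv y \<cdot> ((iv x \<cdot> x) \<cdot> (y \<cdot> iv y)) \<cdot> iv x" by (simp add: assoc)
    also have "\<dots> = iv y \<cdot> iv x" by (simp only: c[symmetric]) (simp add: assoc)
    finally show "iv y \<cdot> iv x \<cdot> (x \<cdot> y \<cdot> (iv y \<cdot> iv x)) = iv y \<cdot> iv x" .
  qed
qed

lemma endo_iv: assumes "endo m \<phi>" shows "\<phi> (iv a) = iv (\<phi> a)"
proof (rule inv_unique)
  have h: "\<And>x y. \<phi> (x \<cdot> y) = \<phi> x \<cdot> \<phi> y" using assms unfolding endo_def by blast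
  show "\<phi> a \<cdot> (\<phi> (iv a) \<cdot> \<phi> a) = \<phi> a" by (metis h inv1)
  show "\<phi> (iv a) \<cdot> (\<phi> a \<cdot> \<phi> (iv a)) = \<phi> (iv a)" by (metis h inv2)
qed

end

locale clifford = invsg +
  assumes central: "e \<cdot> e = e \<Longrightarrow> e \<cdot> a = a \<cdot> e"
begin

lemma xiv_comm: "x \<cdot> iv x = iv x \<cdot> x"
proof -
  let ?e = "x \<cdot> iv x" and ?f = "iv x \<cdot> x"
  have c1: "x \<cdot> ?f = ?f \<cdot> x" using central[OF ivx_idem, of x x] by simp
  have c2: "iv x \<cdot> ?e = ?e \<cdot> iv x" using central[OF xiv_idem, of x "iv x"] by simp
  have 1: "?e = ?f \<cdot> ?e"
  proof -
    have "?e = (x \<cdot> ?f) \<cdot> iv x" by simp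
    also have "\<dots> = ?f \<cdot> ?e" by (simp only: c1 assoc)
    finally show ?thesis .
  qed
  have 2: "?f = ?e \<cdot> ?f"
  proof -
    have "?f = (iv x \<cdot> ?e) \<cdot> x" by (simp add: assoc)
    also have "\<dots> = ?e \<cdot> ?f" by (simp only: c2 assoc)
    finally show ?thesis .
  qed
  show ?thesis using 1 2 idem_comm[OF xiv_idem ivx_idem] by metis
qed

lemma grp_iff: "a \<in> grp_comp m h \<longleftrightarrow> a \<cdot> iv a = h"
  unfolding grp_comp_def using xiv_comm by auto

lemma grp_left: "a \<cdot> iv a = h \<Longrightarrow> h \<cdot> a = a" by (metis assoc inv1)
lemma grp_right: "a \<cdot> iv a = h \<Longrightarrow> a \<cdot> h = a" by (metis xiv_comm inv1)
lemma grp_left': "a \<cdot> iv a = h \<Longrightarrow> h \<cdot> (a \<cdot> z) = a \<cdot> z" by (metis assoc grp_left)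
lemma grp_ivl: "a \<cdot> iv a = h \<Longrightarrow> iv a \<cdot> a = h" by (metis xiv_comm)
lemma grp_idem: "a \<cdot> iv a = h \<Longrightarrow> h \<cdot> h = h" by (metis xiv_idem)

end



context invsg begin
lemma idem_conj: "e \<cdot> e = e \<Longrightarrow> (x \<cdot> e \<cdot> iv x) \<cdot> (x \<cdot> e \<cdot> iv x) = x \<cdot> e \<cdot> iv x"
proof -
  assume e: "e \<cdot> e = e"
  have c: "e \<cdot> (iv x \<cdot> x) = (iv x \<cdot> x) \<cdot> e" by (rule idem_comm[OF e ivx_idem])
  have "(x \<cdot> e \<cdot> iv x) \<cdot> (x \<cdot> e \<cdot> iv x) = x \<cdot> (e \<cdot> (iv x \<cdot> x)) \<cdot> e \<cdot> iv x" by (simp add: assoc)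
  also have "\<dots> = x \<cdot> e \<cdot> iv x" by (simp only: c) (simp add: assoc idem_left[OF e])
  finally show ?thesis .
qed
lemma xxi_iv: "iv (x \<cdot> iv x) = x \<cdot> iv x" by (rule idem_iv[OF xiv_idem])
end

locale setting = S: invsg mS + A: clifford mA
  for mS :: "'s \<Rightarrow> 's \<Rightarrow> 's" (infixl "\<star>" 70) and mA :: "'b \<Rightarrow> 'b \<Rightarrow> 'b" (infixl "\<cdot>" 70) +
  fixes \<alpha> :: "'s \<Rightarrow> 'b" and lam :: "'s \<Rightarrow> 'b \<Rightarrow> 'b" and f :: "'s \<Rightarrow> 's \<Rightarrow> 'b"
  assumes sb: "sieben mS mA \<alpha> lam f"
begin

abbreviation "si \<equiv> S.iv"
abbreviation "ai \<equiv> A.iv"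

lemma tm: "twisted_module mS mA \<alpha> lam f" using sb unfolding sieben_def by blast

lemma alpha_bij: "bij_betw \<alpha> {e. e \<star> e = e} {h. h \<cdot> h = h}"
  using tm unfolding twisted_module_def S.idem_UNIV A.idem_UNIV by blast

lemma alpha_idem: "e \<star> e = e \<Longrightarrow> \<alpha> e \<cdot> \<alpha> e = \<alpha> e"
  using alpha_bij unfolding bij_betw_def by blast

lemma alpha_inj: "e \<star> e = e \<Longrightarrow> e' \<star> e' = e' \<Longrightarrow> \<alpha> e = \<alpha> e' \<Longrightarrow> e = e'"
  using alpha_bij unfolding bij_betw_def inj_on_def by blast

lemma alpha_inv_into: "e \<star> e = e \<Longrightarrow> inv_into (idem UNIV mS) \<alpha> (\<alpha> e) = e"
  using alpha_bij unfolding bij_betw_def S.idem_UNIV by (simp add: inv_into_f_f)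

lemma alpha_surj: "h \<cdot> h = h \<Longrightarrow> inv_into (idem UNIV mS) \<alpha> h \<star> inv_into (idem UNIV mS) \<alpha> h = inv_into (idem UNIV mS) \<alpha> h
   \<and> \<alpha> (inv_into (idem UNIV mS) \<alpha> h) = h"
proof -
  assume h: "h \<cdot> h = h"
  have "h \<in> \<alpha> ` {e. e \<star> e = e}" using alpha_bij h unfolding bij_betw_def by blast
  then obtain e where e: "e \<star> e = e" "h = \<alpha> e" by blast
  have "inv_into {e. e \<star> e = e} \<alpha> h = e" using alpha_inv_into[OF e(1)] e(2) unfolding S.idem_UNIV by simp
  then show ?thesis unfolding S.idem_UNIV using e by simp
qed

lemma alpha_mult: "e \<star> e = e \<Longrightarrow> e' \<star> e' = e' \<Longrightarrow> \<alpha> (e \<star> e') = \<alpha> e \<cdot> \<alpha> e'"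
  using tm unfolding twisted_module_def S.idem_UNIV by blast

lemma lam_endo: "endo mA (lam s)"
  using tm unfolding twisted_module_def rel_invertible_def by blast

lemma lam_mult: "lam s (a \<cdot> b) = lam s a \<cdot> lam s b"
  using lam_endo unfolding endo_def by blast

lemma lam_iv: "lam s (ai a) = ai (lam s a)"
  by (rule A.endo_iv[OF lam_endo])

lemma lam_grp: "a \<cdot> ai a = h \<Longrightarrow> lam s a \<cdot> ai (lam s a) = lam s h"
  using lam_mult[of s a "ai a"] lam_iv[of s a] by simp

lemma f_grp0: "f s t \<in> grp_comp mA (\<alpha> (s \<star> t \<star> si t \<star> si s))"
  using tm unfolding twisted_module_def by blast

lemma f_grp: "f s t \<cdot> ai (f s t) = \<alpha> ((s \<star> t) \<star> si (s \<star> t))"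
  using f_grp0[of s t] unfolding A.grp_iff by (simp add: S.iv_mult S.assoc)

lemma lam_idem: "e \<star> e = e \<Longrightarrow> lam e a = \<alpha> e \<cdot> a"
  using tm unfolding twisted_module_def S.idem_UNIV by blast

lemma lam_alpha: "e \<star> e = e \<Longrightarrow> lam s (\<alpha> e) = \<alpha> (s \<star> e \<star> si s)"
  using tm unfolding twisted_module_def S.idem_UNIV by blast

lemma lam_comp: "lam s (lam t a) = f s t \<cdot> lam (s \<star> t) a \<cdot> ai (f s t)"
  using tm unfolding twisted_module_def by blast

lemma cocycle: "lam s (f t u) \<cdot> f s (t \<star> u) = f s t \<cdot> f (s \<star> t) u"
  using tm unfolding twisted_module_def by blast

lemma sieb1: "e \<star> e = e \<Longrightarrow> f s e = \<alpha> (s \<star> e \<star> si s)"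
  using sb unfolding sieben_def S.idem_UNIV by blast

lemma sieb2: "e \<star> e = e \<Longrightarrow> f e s = \<alpha> (e \<star> s \<star> si s)"
  using sb unfolding sieben_def S.idem_UNIV by blast

lemma aE: "\<alpha> (s \<star> si s) \<cdot> \<alpha> (s \<star> si s) = \<alpha> (s \<star> si s)"
  by (rule alpha_idem[OF S.xiv_idem])


lemma cp_i_eq: "a \<cdot> ai a = \<alpha> g \<Longrightarrow> g \<star> g = g \<Longrightarrow> cp_i mS mA \<alpha> a = (a, g)"
  unfolding cp_i_def by (simp add: alpha_inv_into)

lemma cp_i_gen: "\<exists>e. e \<star> e = e \<and> \<alpha> e = a \<cdot> ai a \<and> cp_i mS mA \<alpha> a = (a, e)"
  using alpha_surj[OF A.xiv_idem, of a] unfolding cp_i_def by blast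

lemma i_inv_cp: "i_inv mS mA \<alpha> (cp_i mS mA \<alpha> a) = a"
  unfolding i_inv_def
  by (rule the_equality) (auto simp: cp_i_def)

lemma i_inv_pair: "a \<cdot> ai a = \<alpha> g \<Longrightarrow> g \<star> g = g \<Longrightarrow> i_inv mS mA \<alpha> (a, g) = a"
  using i_inv_cp cp_i_eq by metis

abbreviation "rho \<equiv> (\<lambda>s. (\<alpha> (s \<star> si s), s))"

lemma rho_carrier: "rho s \<in> cp_carrier mS mA \<alpha>"
  unfolding cp_carrier_def using A.idem_iv[OF aE[of s]] aE[of s] by simp

lemma transversal: "is_transversal mS mA \<alpha> lam f rho"
  unfolding is_transversal_def
proof (intro conjI allI ballI)
  fix s show "rho s \<in> cp_carrier mS mA \<alpha>" by (rule rho_carrier)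
  show "cp_j (rho s) = s" by (simp add: cp_j_def)
next
  fix e assume "e \<in> idem UNIV mS"
  hence e: "e \<star> e = e" by (simp add: S.idem_UNIV)
  have ie: "si e = e" by (rule S.idem_iv[OF e])
  show "rho e \<in> idem (cp_carrier mS mA \<alpha>) (cp_mult mS mA lam f)"
    unfolding idem_def using rho_carrier[of e]
    by (simp add: cp_mult_def ie e lam_idem sieb1 alpha_idem A.assoc)
qed

lemma ind_alpha: "e \<star> e = e \<Longrightarrow> induced_alpha mS mA \<alpha> rho e = \<alpha> e"
  unfolding induced_alpha_def
  using i_inv_pair[of "\<alpha> e" e] by (simp add: S.idem_iv alpha_idem A.idem_iv)

lemma ind_f: "induced_f mS mA \<alpha> lam f rho s t = f s t"
proof -
  let ?x = "s \<star> t"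
  let ?G = "?x \<star> si ?x"
  have G: "?G \<star> ?G = ?G" by (rule S.xiv_idem)
  have G1: "s \<star> t \<star> si t \<star> si s = ?G" by (simp add: S.iv_mult S.assoc)
  have G2: "?G \<star> ?x = ?x" by (metis S.assoc S.inv1)
  have ia: "induced_alpha mS mA \<alpha> rho (s \<star> t \<star> si t \<star> si s) = \<alpha> ?G"
    using G1 ind_alpha[OF G] by simp
  have fg: "f s t \<cdot> ai (f s t) = \<alpha> ?G" by (rule f_grp)
  have lhs: "cp_mult mS mA lam f (rho s) (rho t) = (f s t, ?x)"
  proof -
    have l: "lam s (\<alpha> (t \<star> si t)) = \<alpha> ?G"
      using lam_alpha[OF S.xiv_idem[of t], of s] G1 by (simp add: S.assoc)
    have m: "\<alpha> (s \<star> si s) \<cdot> \<alpha> ?G = \<alpha> ?G"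
      using alpha_mult[OF S.xiv_idem[of s] G] by (simp add: S.iv_mult S.assoc)
    show ?thesis unfolding cp_mult_def using l m A.grp_left[OF fg] by simp
  qed
  have rhs: "a \<cdot> ai a = \<alpha> ?G \<Longrightarrow> cp_mult mS mA lam f (cp_i mS mA \<alpha> a) (rho ?x) = (a, ?x)" for a
  proof -
    assume a: "a \<cdot> ai a = \<alpha> ?G"
    have "cp_i mS mA \<alpha> a = (a, ?G)" by (rule cp_i_eq[OF a G])
    moreover have "f ?G ?x = \<alpha> ?G" using sieb2[OF G, of ?x] G2 G by simp
    ultimately show ?thesis unfolding cp_mult_def
      using lam_idem[OF G] alpha_idem[OF G] A.grp_right[OF a] G2 by simp
  qed
  show ?thesis unfolding induced_f_def ia
  proof (rule the_equality)
    show "f s t \<in> grp_comp mA (\<alpha> ?G) \<and>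
      cp_mult mS mA lam f (rho s) (rho t) = cp_mult mS mA lam f (cp_i mS mA \<alpha> (f s t)) (rho ?x)"
      using fg rhs[OF fg] lhs by (simp add: A.grp_iff)
    fix a assume "a \<in> grp_comp mA (\<alpha> ?G) \<and>
      cp_mult mS mA lam f (rho s) (rho t) = cp_mult mS mA lam f (cp_i mS mA \<alpha> a) (rho ?x)"
    then show "a = f s t" using rhs lhs by (auto simp: A.grp_iff)
  qed
qed


lemma S_id1: "s \<star> si s \<star> s = s" by (metis S.assoc S.inv1)
lemma S_id2: "si s \<star> s \<star> si s = si s" by (metis S.assoc S.inv2)
lemma S_id3: "s \<star> (si s \<star> s) \<star> si s = s \<star> si s" by (metis S.assoc S.inv1)
lemma S_id4: "si s \<star> (s \<star> si s) \<star> s = si s \<star> s" by (metis S.assoc S.inv2)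
lemma S_id5: "s \<star> si s \<star> s \<star> si s = s \<star> si s" by (metis S.assoc S.inv1)
lemma S_id6: "si s \<star> s \<star> si s \<star> s = si s \<star> s" by (metis S.assoc S.inv2)

lemma fss_grp: "f s (si s) \<cdot> ai (f s (si s)) = \<alpha> (s \<star> si s)"
  using f_grp[of s "si s"] S.idem_iv[OF S.xiv_idem[of s]] S.xiv_idem[of s] by simp

lemma F_grp: "f (si s) s \<cdot> ai (f (si s) s) = \<alpha> (si s \<star> s)"
  using f_grp[of "si s" s] S.idem_iv[OF S.ivx_idem[of s]] S.ivx_idem[of s] by simp

lemma lamF_grp: "lam s (f (si s) s) \<cdot> ai (lam s (f (si s) s)) = \<alpha> (s \<star> si s)"
  using lam_grp[OF F_grp, of s] lam_alpha[OF S.ivx_idem[of s], of s] S_id3[of s] by simp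

lemma lamF: "lam s (f (si s) s) = f s (si s)"
proof -
  have c: "lam s (f (si s) s) \<cdot> f s (si s \<star> s) = f s (si s) \<cdot> f (s \<star> si s) s" by (rule cocycle)
  have 1: "f s (si s \<star> s) = \<alpha> (s \<star> si s)" using sieb1[OF S.ivx_idem, of s s] S_id3[of s] by simp
  have 2: "f (s \<star> si s) s = \<alpha> (s \<star> si s)" using sieb2[OF S.xiv_idem, of s s] S_id5[of s] by simp
  show ?thesis using c unfolding 1 2 A.grp_right[OF lamF_grp] A.grp_right[OF fss_grp] .
qed

lemma grp_inv: "a \<cdot> ai a = h \<Longrightarrow> ai a \<cdot> ai (ai a) = h" using A.grp_ivl by simp

lemma rho_sinv: "sinv (cp_carrier mS mA \<alpha>) (cp_mult mS mA lam f) (rho s) = (ai (f (si s) s), si s)"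
proof -
  let ?E = "s \<star> si s" and ?Fi = "si s \<star> s" and ?F = "f (si s) s" and ?fs = "f s (si s)"
  let ?y = "(ai ?F, si s)" and ?x = "rho s" and ?m = "cp_mult mS mA lam f"
  have E: "?E \<star> ?E = ?E" by (rule S.xiv_idem)
  have Fi: "?Fi \<star> ?Fi = ?Fi" by (rule S.ivx_idem)
  have aE: "\<alpha> ?E \<cdot> \<alpha> ?E = \<alpha> ?E" by (rule alpha_idem[OF E])
  have aFi: "\<alpha> ?Fi \<cdot> \<alpha> ?Fi = \<alpha> ?Fi" by (rule alpha_idem[OF Fi])
  have Fg: "ai ?F \<cdot> ai (ai ?F) = \<alpha> ?Fi" by (rule grp_inv[OF F_grp])
  have fsg: "ai ?fs \<cdot> ai (ai ?fs) = \<alpha> ?E" by (rule grp_inv[OF fss_grp])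
  have lamE: "lam ?E (\<alpha> ?E) = \<alpha> ?E" using lam_idem[OF E] aE by simp
  have fEs: "f ?E s = \<alpha> ?E" using sieb2[OF E, of s] S_id5[of s] by simp
  have Es: "?E \<star> s = s" by (rule S_id1)
  have ymem: "?y \<in> cp_carrier mS mA \<alpha>" unfolding cp_carrier_def using Fg by simp
  have xy: "?m ?x ?y = (\<alpha> ?E, ?E)"
  proof -
    have "lam s (ai ?F) = ai ?fs" using lam_iv[of s ?F] lamF[of s] by simp
    then show ?thesis unfolding cp_mult_def
      using A.grp_left[OF fsg] A.grp_ivl[OF fss_grp] by simp
  qed
  have xyx: "?m (?m ?x ?y) ?x = ?x" unfolding xy unfolding cp_mult_def
    using lamE fEs Es aE by simp
  have yx: "?m ?y ?x = (\<alpha> ?Fi, ?Fi)"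
  proof -
    have "lam (si s) (\<alpha> ?E) = \<alpha> ?Fi" using lam_alpha[OF E, of "si s"] S_id6[of s] by (simp add: S.assoc)
    then show ?thesis unfolding cp_mult_def
      using A.grp_right[OF Fg] A.grp_ivl[OF F_grp] by simp
  qed
  have yxy: "?m (?m ?y ?x) ?y = ?y"
  proof -
    have 1: "lam ?Fi (ai ?F) = ai ?F" using lam_idem[OF Fi] A.grp_left[OF Fg] by simp
    have 2: "f ?Fi (si s) = \<alpha> ?Fi" using sieb2[OF Fi, of "si s"] S_id6[of s] by simp
    have 3: "?Fi \<star> si s = si s" by (rule S_id2)
    show ?thesis unfolding yx unfolding cp_mult_def
      using 1 2 3 A.grp_left[OF Fg] A.grp_right[OF Fg] by simp
  qed
  show ?thesis unfolding sinv_def[of "cp_carrier mS mA \<alpha>"]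
  proof (rule the_equality)
    show "?y \<in> cp_carrier mS mA \<alpha> \<and> ?m (?m ?x ?y) ?x = ?x \<and> ?m (?m ?y ?x) ?y = ?y"
      using ymem xyx yxy by blast
    fix z assume z: "z \<in> cp_carrier mS mA \<alpha> \<and> ?m (?m ?x z) ?x = ?x \<and> ?m (?m z ?x) z = z"
    obtain c u where zcu: "z = (c, u)" by fastforce
    have u1: "s \<star> u \<star> s = s" using z unfolding zcu cp_mult_def by simp
    have u2: "u \<star> s \<star> u = u" using z unfolding zcu cp_mult_def by simp
    have u: "u = si s" using S.inv_unique[of s u] u1 u2 by (simp add: S.assoc)
    have cg: "c \<cdot> ai c = \<alpha> ?Fi" using z unfolding zcu cp_carrier_def u by simp
    have lcg: "lam s c \<cdot> ai (lam s c) = \<alpha> ?E"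
      using lam_grp[OF cg, of s] lam_alpha[OF Fi, of s] S_id3[of s] by simp
    have "(lam s c \<cdot> ?fs) \<cdot> \<alpha> ?E \<cdot> \<alpha> ?E = \<alpha> ?E"
      using z unfolding zcu cp_mult_def u using lamE fEs A.grp_left[OF lcg] by simp
    hence "lam s c \<cdot> ?fs = \<alpha> ?E"
      using A.grp_right[OF lcg] A.grp_right[OF fss_grp] aE by (simp add: A.assoc)
    hence "(lam s c \<cdot> ?fs) \<cdot> ai ?fs = ai ?fs" using A.grp_left[OF fsg] by simp
    hence lc: "lam s c = ai ?fs" using fss_grp A.grp_right[OF lcg] by (simp add: A.assoc)
    have lF: "lam s (ai ?F) = ai ?fs" using lam_iv[of s ?F] lamF[of s] by simp
    have k1: "lam (si s) (lam s c) = ?F \<cdot> c \<cdot> ai ?F"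
      using lam_comp[of "si s" s c] lam_idem[OF Fi] A.grp_left[OF cg] by simp
    have k2: "lam (si s) (lam s (ai ?F)) = ?F \<cdot> ai ?F \<cdot> ai ?F"
      using lam_comp[of "si s" s "ai ?F"] lam_idem[OF Fi] A.grp_left[OF Fg] by simp
    have eq: "?F \<cdot> c \<cdot> ai ?F = ?F \<cdot> ai ?F \<cdot> ai ?F" using k1 k2 lc lF by simp
    have "ai ?F \<cdot> (?F \<cdot> c \<cdot> ai ?F) \<cdot> ?F = (ai ?F \<cdot> ?F) \<cdot> c \<cdot> (ai ?F \<cdot> ?F)"
      by (simp only: A.assoc)
    also have "\<dots> = c" using A.grp_ivl[OF F_grp] A.grp_left[OF cg] A.grp_right[OF cg] by simp
    finally have "c = ai ?F \<cdot> (?F \<cdot> c \<cdot> ai ?F) \<cdot> ?F" by simp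
    also have "\<dots> = ai ?F" unfolding eq
      using A.grp_ivl[OF F_grp] F_grp A.grp_left[OF Fg] A.grp_right[OF Fg] by (simp add: A.assoc)
    finally have "c = ai ?F" .
    then show "z = ?y" using zcu u by simp
  qed
qed


lemma ind_lambda: "induced_lambda mS mA \<alpha> lam f rho s a = lam s a"
proof -
  obtain e where e: "e \<star> e = e" and ae: "\<alpha> e = a \<cdot> ai a" and cpi: "cp_i mS mA \<alpha> a = (a, e)"
    using cp_i_gen by blast
  let ?E = "s \<star> si s" and ?Fi = "si s \<star> s" and ?F = "f (si s) s" and ?fs = "f s (si s)"
  let ?g = "s \<star> e \<star> si s"
  have E: "?E \<star> ?E = ?E" by (rule S.xiv_idem)
  have Fi: "?Fi \<star> ?Fi = ?Fi" by (rule S.ivx_idem)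
  have g: "?g \<star> ?g = ?g" by (rule S.idem_conj[OF e])
  have ag: "\<alpha> ?g \<cdot> \<alpha> ?g = \<alpha> ?g" by (rule alpha_idem[OF g])
  have aig: "ai (\<alpha> ?g) = \<alpha> ?g" by (rule A.idem_iv[OF ag])
  have cen: "\<alpha> ?g \<cdot> x = x \<cdot> \<alpha> ?g" for x by (rule A.central[OF ag])
  have la: "lam s a \<cdot> ai (lam s a) = \<alpha> ?g"
    using lam_grp[OF ae[symmetric], of s] lam_alpha[OF e, of s] by simp
  have fse: "f s e = \<alpha> ?g" by (rule sieb1[OF e])
  have Eg: "\<alpha> ?E \<cdot> \<alpha> ?g = \<alpha> ?g"
  proof -
    have "?E \<star> ?g = ?g" by (metis S.assoc S.inv1)
    thus ?thesis using alpha_mult[OF E g] by simp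
  qed
  have P: "cp_mult mS mA lam f (rho s) (a, e) = (lam s a, s \<star> e)"
  proof -
    have "\<alpha> ?E \<cdot> lam s a = lam s a"
      using A.grp_left[OF la] Eg by (metis A.assoc)
    thus ?thesis unfolding cp_mult_def using fse A.grp_right[OF la] by simp
  qed
  have k: "\<alpha> ?g \<cdot> lam (s \<star> e) x = \<alpha> ?g \<cdot> lam s x" for x
  proof -
    have "lam s (lam e x) = \<alpha> ?g \<cdot> lam (s \<star> e) x \<cdot> \<alpha> ?g"
      using lam_comp[of s e x] fse aig by simp
    moreover have "lam s (lam e x) = \<alpha> ?g \<cdot> lam s x"
      using lam_idem[OF e] lam_mult lam_alpha[OF e] by simp
    ultimately have "\<alpha> ?g \<cdot> lam s x = \<alpha> ?g \<cdot> lam (s \<star> e) x \<cdot> \<alpha> ?g" by simp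
    also have "\<dots> = \<alpha> ?g \<cdot> lam (s \<star> e) x" using cen[of "lam (s \<star> e) x"] ag by (metis A.assoc)
    finally show ?thesis by simp
  qed
  have f1: "\<alpha> ?g \<cdot> f s (e \<star> si s) = f (s \<star> e) (si s)"
  proof -
    have c: "lam s (f e (si s)) \<cdot> f s (e \<star> si s) = f s e \<cdot> f (s \<star> e) (si s)" by (rule cocycle)
    have es: "e \<star> si s \<star> s = e \<star> ?Fi" by (simp add: S.assoc)
    have esi: "(e \<star> ?Fi) \<star> (e \<star> ?Fi) = e \<star> ?Fi" by (rule S.idem_prod[OF e Fi])
    have "f e (si s) = \<alpha> (e \<star> ?Fi)" using sieb2[OF e, of "si s"] es by simp
    moreover have "lam s (\<alpha> (e \<star> ?Fi)) = \<alpha> ?g"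
      using lam_alpha[OF esi, of s] by (simp add: S.assoc)
    ultimately have c': "\<alpha> ?g \<cdot> f s (e \<star> si s) = \<alpha> ?g \<cdot> f (s \<star> e) (si s)" using c fse by simp
    have "f (s \<star> e) (si s) \<cdot> ai (f (s \<star> e) (si s)) = \<alpha> ?g"
      using f_grp[of "s \<star> e" "si s"] S.idem_iv[OF g] g by simp
    thus ?thesis using c' A.grp_left by metis
  qed
  have f2: "\<alpha> ?g \<cdot> f s (e \<star> si s) = ?fs \<cdot> \<alpha> ?g"
  proof -
    have c: "lam s (f (si s) ?g) \<cdot> f s (si s \<star> ?g) = ?fs \<cdot> f (s \<star> si s) ?g" by (rule cocycle)
    have gi: "(si s \<star> ?g \<star> s) \<star> (si s \<star> ?g \<star> s) = si s \<star> ?g \<star> s"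
      using S.idem_conj[OF g, of "si s"] by simp
    have "f (si s) ?g = \<alpha> (si s \<star> ?g \<star> s)" using sieb1[OF g, of "si s"] by simp
    moreover have "lam s (\<alpha> (si s \<star> ?g \<star> s)) = \<alpha> ?g"
      using lam_alpha[OF gi, of s] by (simp add: S.assoc)
    moreover have "f (s \<star> si s) ?g = \<alpha> ?g"
      using sieb1[OF g, of "s \<star> si s"] S.xxi_iv[of s] by (simp add: S.assoc)
    moreover have "si s \<star> ?g = e \<star> si s"
    proof -
      have cm: "e \<star> ?Fi = ?Fi \<star> e" by (rule S.idem_comm[OF e Fi])
      have "si s \<star> ?g = (?Fi \<star> e) \<star> si s" by (simp add: S.assoc)
      also have "\<dots> = e \<star> (si s \<star> s \<star> si s)" unfolding cm[symmetric] by (simp add: S.assoc)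
      also have "\<dots> = e \<star> si s" by (simp add: S.assoc)
      finally show ?thesis .
    qed
    ultimately show ?thesis using c by simp
  qed
  have fse_s: "f (s \<star> e) (si s) = ?fs \<cdot> \<alpha> ?g" using f1 f2 by simp
  have Q1: "(lam s a \<cdot> lam (s \<star> e) (ai ?F)) \<cdot> f (s \<star> e) (si s) = lam s a"
  proof -
    have "(lam s a \<cdot> lam (s \<star> e) (ai ?F)) \<cdot> f (s \<star> e) (si s)
        = (lam s a \<cdot> \<alpha> ?g) \<cdot> lam (s \<star> e) (ai ?F) \<cdot> ?fs \<cdot> \<alpha> ?g"
      using A.grp_right[OF la] fse_s by (simp add: A.assoc)
    also have "\<dots> = lam s a \<cdot> (\<alpha> ?g \<cdot> lam s (ai ?F)) \<cdot> ?fs \<cdot> \<alpha> ?g"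
      using k[of "ai ?F"] by (simp add: A.assoc)
    also have "\<dots> = lam s a \<cdot> (ai ?fs \<cdot> ?fs) \<cdot> \<alpha> ?g"
    proof -
      have r: "lam s a \<cdot> (\<alpha> ?g \<cdot> z) = lam s a \<cdot> z" for z
        using A.grp_right[OF la] by (metis A.assoc)
      show ?thesis using r lam_iv[of s ?F] lamF[of s] by (simp add: A.assoc)
    qed
    also have "\<dots> = lam s a \<cdot> (\<alpha> ?E \<cdot> \<alpha> ?g)" using A.grp_ivl[OF fss_grp] by (simp add: A.assoc)
    also have "\<dots> = lam s a" using Eg A.grp_right[OF la] by simp
    finally show ?thesis .
  qed
  have Q: "cp_mult mS mA lam f (lam s a, s \<star> e) (ai ?F, si s) = (lam s a, ?g)"
    unfolding cp_mult_def using Q1 by simp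
  show ?thesis unfolding induced_lambda_def cpi P rho_sinv Q
    by (rule i_inv_pair[OF la g])
qed

end

theorem corollary3p30:
  fixes mS :: "'s \<Rightarrow> 's \<Rightarrow> 's" and mA :: "'a \<Rightarrow> 'a \<Rightarrow> 'a"
    and \<alpha> :: "'s \<Rightarrow> 'a" and lam :: "'s \<Rightarrow> 'a \<Rightarrow> 'a" and f :: "'s \<Rightarrow> 's \<Rightarrow> 'a"
  assumes "inv_sg UNIV mS"
    and "semilattice_of_groups mA"
    and "sieben mS mA \<alpha> lam f"
  defines "\<rho> \<equiv> (\<lambda>s. (\<alpha> (mS s (sinv UNIV mS s)), s))"
  shows "is_transversal mS mA \<alpha> lam f \<rho> \<and>
         (\<forall>e\<in>idem UNIV mS. induced_alpha mS mA \<alpha> \<rho> e = \<alpha> e) \<and>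
         (\<forall>s a. induced_lambda mS mA \<alpha> lam f \<rho> s a = lam s a) \<and>
         (\<forall>s t. induced_f mS mA \<alpha> lam f \<rho> s t = f s t)"
proof -
  interpret setting mS mA \<alpha> lam f
  proof unfold_locales
    show "inv_sg UNIV mS" by fact
    show "inv_sg UNIV mA" using assms(2) unfolding semilattice_of_groups_def by blast
    show "\<And>e a. mA e e = e \<Longrightarrow> mA e a = mA a e"
      using assms(2) unfolding semilattice_of_groups_def idem_def by blast
    show "sieben mS mA \<alpha> lam f" by fact
  qed
  show ?thesis unfolding \<rho>_def
    using transversal ind_alpha ind_lambda ind_f by (simp add: S.idem_UNIV)
qed

end
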